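(* Let $(J,\mathcal F)$, coefficients $b^S,w^S_j$, and $P(\mathcal F)$ be as in the context, with $P(\mathcal F)$ an $\mathcal F$-extended polymatroid. Let $\mathbf c\in\mathbb R^J$ and let algorithm $\mathrm{AG}_1$ on input $\mathbf c$ output $\boldsymbol\pi=(\pi_1,\dots,\pi_n)$ and $\boldsymbol\nu$; put $S_k=\{\pi_k,\dots,\pi_n\}$. (a) For every $\mathbf x\in\mathbb R^J$, $$\sum_{j\in J}c_jx_j=\nu_{\pi_1}\sum_{j\in S_1}w^{S_1}_jx_j+\sum_{k=2}^n(\nu_{\pi_k}-\nu_{\pi_{k-1}})\sum_{j\in S_k}w^{S_k}_jx_j,$$ and $\sum_{j\in J}c_jx^{\boldsymbol\pi}_j=\nu_{\pi_1}b^{S_1}+\sum_{k=2}^n(\nu_{\pi_k}-\nu_{\pi_{k-1}})b^{S_k}$. (b) If $\nu_{\pi_1}\le\nu_{\pi_2}\le\cdots\le\nu_{\pi_n}$, then $\mathbf x^{\boldsymbol\pi}$ and $\mathbf y^{\boldsymbol\pi}$ form an optimal primal-dual pair for the LP $\min\{\sum_jc_jx_j:\mathbf x\in P(\mathcal F)\}$ and its dual, and the optimal value is $\nu_{\pi_1}b^{S_1}+\sum_{k=2}^n(\nu_{\pi_k}-\nu_{\pi_{k-1}})b^{S_k}$.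
   Context: $J$ is a finite set, $|J|=n$; $\mathcal F\subseteq2^J$ with $\emptyset\in\mathcal F$, every nonempty $S\in\mathcal F$ having nonempty inner boundary $\partial^-S=\{j\in S:S\setminus\{j\}\in\mathcal F\}$, and every $S\in\mathcal F$, $S\ne J$, having some $j\in J\setminus S$ with $S\cup\{j\}\in\mathcal F$. A full $\mathcal F$-string is an ordering $\boldsymbol\pi=(\pi_1,\dots,\pi_n)$ of $J$ with $\{\pi_k,\dots,\pi_n\}\in\mathcal F$ for all $k$; $\Pi(\mathcal F)$ is the set of these. Given $b^S\ge0$ and $w^S_j>0$ for $j\in S\in\mathcal F$, $P(\mathcal F)=\{\mathbf x\in\mathbb R^J: \sum_{j\in S}w^S_jx_j\ge b^S\ (S\in\mathcal F\setminus\{J\}),\ \sum_{j\in J}w^J_jx_j=b^J,\ \mathbf x\ge0\}$. For $\boldsymbol\pi\in\Pi(\mathcal F)$, $\mathbf x^{\boldsymbol\pi}$ is the unique solution of $\sum_{l=k}^nw^{S_k}_{\pi_l}x_{\pi_l}=b^{S_k}$, $1\le k\le n$, where $S_k=\{\pi_k,\dots,\pi_n\}$. $P(\mathcal F)$ is an $\mathcal F$-extended polymatroid if $\mathbf x^{\boldsymbol\pi}\in P(\mathcal F)$ for all $\boldsymbol\pi\in\Pi(\mathcal F)$. The dual LP is $\max\{\sum_{S\in\mathcal F}b^Sy^S:\sum_{S:j\in S\in\mathcal F}w^S_jy^S\le c_j\ (j\in J),\ y^S\ge0\ (S\ne J),\ y^J\text{ free}\}$. Algorithm $\mathrm{AG}_1$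 on input $\mathbf c$: $S_1=J$, $y^{S_1}=\min\{c_j/w^{S_1}_j:j\in\partial^-S_1\}$, $\pi_1$ a minimizer, $\nu_{\pi_1}=y^{S_1}$; for $k=2,\dots,n$: $S_k=S_{k-1}\setminus\{\pi_{k-1}\}$, $y^{S_k}=\min\{(c_j-\sum_{l=1}^{k-1}y^{S_l}w^{S_l}_j)/w^{S_k}_j:j\in\partial^-S_k\}$, $\pi_k$ a minimizer, $\nu_{\pi_k}=\nu_{\pi_{k-1}}+y^{S_k}$. Define $\mathbf y^{\boldsymbol\pi}=(y^{\boldsymbol\pi,S})_{S\in\mathcal F}$ by $y^{\boldsymbol\pi,S_1}=\nu_{\pi_1}$, $y^{\boldsymbol\pi,S_k}=\nu_{\pi_k}-\nu_{\pi_{k-1}}$ for $2\le k\le n$, and $y^{\boldsymbol\pi,S}=0$ for all other $S\in\mathcal F$. *)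

theory Defs
  imports Main "HOL.Real"
begin

text \<open>Vectors in R^J are functions 'a => real that vanish outside J.
  A string (ordering) pi = (pi_1,...,pi_n) is a list p with p!(k-1) = pi_k (0-indexed).\<close>

definition inner_bd :: "'a set set \<Rightarrow> 'a set \<Rightarrow> 'a set" where
  "inner_bd F S = {j \<in> S. S - {j} \<in> F}"

definition Sk :: "'a list \<Rightarrow> nat \<Rightarrow> 'a set" where
  "Sk p k = set (drop k p)"

definition full_strings :: "'a set \<Rightarrow> 'a set set \<Rightarrow> 'a list set" where
  "full_strings J F = {p. distinct p \<and> set p = J \<and> (\<forall>k < length p. Sk p k \<in> F)}"

definition polyP :: "'a set \<Rightarrow> 'a set set \<Rightarrow> ('a set \<Rightarrow> 'a \<Rightarrow> real) \<Rightarrow> ('a set \<Rightarrow> real)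
    \<Rightarrow> ('a \<Rightarrow> real) set" where
  "polyP J F w b = {x. (\<forall>S \<in> F - {J}. (\<Sum>j\<in>S. w S j * x j) \<ge> b S)
      \<and> (\<Sum>j\<in>J. w J j * x j) = b J
      \<and> (\<forall>j\<in>J. x j \<ge> 0) \<and> (\<forall>j. j \<notin> J \<longrightarrow> x j = 0)}"

definition xpi :: "'a set \<Rightarrow> ('a set \<Rightarrow> 'a \<Rightarrow> real) \<Rightarrow> ('a set \<Rightarrow> real) \<Rightarrow> 'a list \<Rightarrow> ('a \<Rightarrow> real)" where
  "xpi J w b p = (THE x. (\<forall>k < length p. (\<Sum>j\<in>Sk p k. w (Sk p k) j * x j) = b (Sk p k))
                        \<and> (\<forall>j. j \<notin> J \<longrightarrow> x j = 0))"

definition ext_polymatroid :: "'a set \<Rightarrow> 'a set set \<Rightarrow> ('a set \<Rightarrow> 'a \<Rightarrow> real) \<Rightarrow> ('a set \<Rightarrow> real) \<Rightarrow> bool" where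
  "ext_polymatroid J F w b = (\<forall>p \<in> full_strings J F. xpi J w b p \<in> polyP J F w b)"

text \<open>Increment y^{S_k} of the algorithm, expressed through nu:
  y^{S_1} = nu_{pi_1}, y^{S_k} = nu_{pi_k} - nu_{pi_(k-1)}.\<close>
definition yinc :: "('a \<Rightarrow> real) \<Rightarrow> 'a list \<Rightarrow> nat \<Rightarrow> real" where
  "yinc \<nu> p k = (if k = 0 then \<nu> (p ! 0) else \<nu> (p ! k) - \<nu> (p ! (k - 1)))"

definition ratio :: "('a \<Rightarrow> real) \<Rightarrow> ('a set \<Rightarrow> 'a \<Rightarrow> real) \<Rightarrow> ('a \<Rightarrow> real) \<Rightarrow> 'a list \<Rightarrow> nat \<Rightarrow> 'a \<Rightarrow> real" where
  "ratio c w \<nu> p k j = (c j - (\<Sum>l<k. yinc \<nu> p l * w (Sk p l) j)) / w (Sk p k) j"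

text \<open>(p, nu) is a possible output of algorithm AG_1 on input c (any choice of minimizers).\<close>
definition AG1_output :: "'a set \<Rightarrow> 'a set set \<Rightarrow> ('a set \<Rightarrow> 'a \<Rightarrow> real) \<Rightarrow> ('a \<Rightarrow> real)
    \<Rightarrow> 'a list \<Rightarrow> ('a \<Rightarrow> real) \<Rightarrow> bool" where
  "AG1_output J F w c p \<nu> = (distinct p \<and> set p = J \<and>
     (\<forall>k < length p. p ! k \<in> inner_bd F (Sk p k)
        \<and> (\<forall>j \<in> inner_bd F (Sk p k). ratio c w \<nu> p k (p ! k) \<le> ratio c w \<nu> p k j)
        \<and> yinc \<nu> p k = ratio c w \<nu> p k (p ! k)))"

definition ypi :: "'a list \<Rightarrow> ('a \<Rightarrow> real) \<Rightarrow> 'a set \<Rightarrow> real" where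
  "ypi p \<nu> S = (\<Sum>k<length p. if S = Sk p k then yinc \<nu> p k else 0)"

definition dual_feasible :: "'a set \<Rightarrow> 'a set set \<Rightarrow> ('a set \<Rightarrow> 'a \<Rightarrow> real) \<Rightarrow> ('a \<Rightarrow> real)
    \<Rightarrow> ('a set \<Rightarrow> real) \<Rightarrow> bool" where
  "dual_feasible J F w c y = ((\<forall>j\<in>J. (\<Sum>S\<in>{S\<in>F. j \<in> S}. w S j * y S) \<le> c j)
      \<and> (\<forall>S \<in> F - {J}. y S \<ge> 0))"

definition dual_obj :: "'a set set \<Rightarrow> ('a set \<Rightarrow> real) \<Rightarrow> ('a set \<Rightarrow> real) \<Rightarrow> real" where
  "dual_obj F b y = (\<Sum>S\<in>F. b S * y S)"

end

theory Submission
  imports Defs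
begin

lemma Sk_Cons_0: "Sk (a # q) 0 = insert a (set q)" by (simp add: Sk_def)
lemma Sk_Cons_Suc: "Sk (a # q) (Suc k) = Sk q k" by (simp add: Sk_def)

lemma tri_unique:
  assumes "distinct q" "\<forall>k<length q. W (Sk q k) (q!k) \<noteq> 0"
  shows "\<exists>!x. (\<forall>k<length q. (\<Sum>j\<in>Sk q k. W (Sk q k) j * x j) = B (Sk q k)) \<and> (\<forall>j. j \<notin> set q \<longrightarrow> x j = (0::real))"
  using assms
proof (induction q)
  case Nil
  show ?case by (rule ex1I[of _ "\<lambda>_. 0"]) auto
next
  case (Cons a q)
  have dq: "distinct q" and anq: "a \<notin> set q" using Cons.prems by auto
  have wq: "\<forall>k<length q. W (Sk q k) (q!k) \<noteq> 0"
    using Cons.prems(2) by (auto simp: Sk_Cons_Suc)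
  have wa: "W (insert a (set q)) a \<noteq> 0" using Cons.prems(2)[rule_format, of 0] by (simp add: Sk_Cons_0)
  from Cons.IH[OF dq wq] obtain x' where x': "(\<forall>k<length q. (\<Sum>j\<in>Sk q k. W (Sk q k) j * x' j) = B (Sk q k))"
     "(\<forall>j. j \<notin> set q \<longrightarrow> x' j = 0)"
    and un: "\<And>y. (\<forall>k<length q. (\<Sum>j\<in>Sk q k. W (Sk q k) j * y j) = B (Sk q k)) \<and> (\<forall>j. j \<notin> set q \<longrightarrow> y j = 0) \<Longrightarrow> y = x'"
    by metis
  let ?S = "insert a (set q)"
  define v where "v = (B ?S - (\<Sum>j\<in>set q. W ?S j * x' j)) / W ?S a"
  have Sksub: "Sk q k \<subseteq> set q" for k by (auto simp: Sk_def dest: in_set_dropD)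
  have eqs: "(\<Sum>j\<in>Sk q k. W (Sk q k) j * (x'(a:=t)) j) = (\<Sum>j\<in>Sk q k. W (Sk q k) j * x' j)" for k t
    by (rule sum.cong) (use Sksub anq in auto)
  have eqs0: "(\<Sum>j\<in>set q. W ?S j * (x'(a:=t)) j) = (\<Sum>j\<in>set q. W ?S j * x' j)" for t
    by (rule sum.cong) (use anq in auto)
  show ?case
  proof (rule ex1I[of _ "x'(a := v)"])
    show "(\<forall>k<length (a # q). (\<Sum>j\<in>Sk (a # q) k. W (Sk (a # q) k) j * (x'(a := v)) j) = B (Sk (a # q) k)) \<and>
      (\<forall>j. j \<notin> set (a # q) \<longrightarrow> (x'(a := v)) j = 0)"
    proof (intro conjI allI impI)
      fix k assume "k < length (a # q)"
      show "(\<Sum>j\<in>Sk (a # q) k. W (Sk (a # q) k) j * (x'(a := v)) j) = B (Sk (a # q) k)"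
      proof (cases k)
        case 0
        have "(\<Sum>j\<in>?S. W ?S j * (x'(a := v)) j) = W ?S a * v + (\<Sum>j\<in>set q. W ?S j * (x'(a:=v)) j)"
          using anq by (simp add: sum.insert)
        also have "\<dots> = B ?S" using eqs0 wa by (simp add: v_def)
        finally show ?thesis using 0 by (simp add: Sk_Cons_0)
      next
        case (Suc m)
        then show ?thesis using x'(1) eqs \<open>k < length (a # q)\<close> by (simp add: Sk_Cons_Suc)
      qed
    next
      fix j assume "j \<notin> set (a # q)" then show "(x'(a := v)) j = 0" using x'(2) by auto
    qed
  next
    fix y assume y: "(\<forall>k<length (a # q). (\<Sum>j\<in>Sk (a # q) k. W (Sk (a # q) k) j * y j) = B (Sk (a # q) k)) \<and>
      (\<forall>j. j \<notin> set (a # q) \<longrightarrow> y j = 0)"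
    have "y(a:=0) = x'"
    proof (rule un, intro conjI allI impI)
      fix k assume k: "k < length q"
      have "(\<Sum>j\<in>Sk q k. W (Sk q k) j * (y(a:=0)) j) = (\<Sum>j\<in>Sk q k. W (Sk q k) j * y j)"
        by (rule sum.cong) (use Sksub anq in auto)
      also have "\<dots> = B (Sk q k)" using y k by (auto simp: Sk_Cons_Suc dest: spec[of _ "Suc k"])
      finally show "(\<Sum>j\<in>Sk q k. W (Sk q k) j * (y(a:=0)) j) = B (Sk q k)" .
    next
      fix j assume "j \<notin> set q" then show "(y(a:=0)) j = 0" using y by auto
    qed
    have e0: "(\<Sum>j\<in>?S. W ?S j * y j) = B ?S" using y by (auto simp: Sk_Cons_0 dest: spec[of _ 0])
    have "(\<Sum>j\<in>set q. W ?S j * y j) = (\<Sum>j\<in>set q. W ?S j * x' j)"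
      using \<open>y(a:=0) = x'\<close> anq by (auto intro!: sum.cong simp: fun_eq_iff split: if_splits)
    then have "W ?S a * y a + (\<Sum>j\<in>set q. W ?S j * x' j) = B ?S" using e0 anq by (simp add: sum.insert)
    then have "y a = v" using wa by (simp add: v_def field_simps)
    then show "y = x'(a := v)" using \<open>y(a:=0) = x'\<close> by (auto simp: fun_eq_iff split: if_splits)
  qed
qed


lemma Sk_nth_mem:
  assumes "distinct p" "m < length p"
  shows "p ! m \<in> Sk p k \<longleftrightarrow> k \<le> m"
proof
  assume "p ! m \<in> Sk p k"
  then obtain i where i: "i < length (drop k p)" "drop k p ! i = p ! m" by (auto simp: Sk_def in_set_conv_nth)
  then have "p ! (k + i) = p ! m" "k + i < length p" by auto
  then have "k + i = m" using assms nth_eq_iff_index_eq by blast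
  then show "k \<le> m" by simp
next
  assume "k \<le> m"
  then have "drop k p ! (m - k) = p ! m" "m - k < length (drop k p)" using assms by auto
  then show "p ! m \<in> Sk p k" unfolding Sk_def by (metis nth_mem)
qed

lemma Sk_step:
  assumes "distinct p" "k < length p"
  shows "Sk p k - {p ! k} = Sk p (Suc k)"
proof -
  have "drop k p = p ! k # drop (Suc k) p" using assms by (simp add: Cons_nth_drop_Suc)
  moreover have "distinct (drop k p)" using assms by simp
  ultimately show ?thesis unfolding Sk_def by (metis Diff_insert_absorb distinct.simps(2) list.set(2))
qed

lemma J_in_F:
  assumes finJ: "finite J" and FJ: "F \<subseteq> Pow J" and empty: "{} \<in> F"
    and aug: "\<And>S. S \<in> F \<Longrightarrow> S \<noteq> J \<Longrightarrow> \<exists>j \<in> J - S. insert j S \<in> F"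
  shows "J \<in> F"
proof -
  have "\<exists>S\<in>F. card S \<ge> m" if "m \<le> card J" for m
    using that
  proof (induction m)
    case 0 then show ?case using empty by auto
  next
    case (Suc m)
    then obtain S where S: "S \<in> F" "card S \<ge> m" by auto
    show ?case
    proof (cases "S = J")
      case True then show ?thesis using S Suc.prems by auto
    next
      case False
      then obtain j where j: "j \<in> J - S" "insert j S \<in> F" using aug S by blast
      have "finite S" using S FJ finJ by (meson PowD finite_subset in_mono)
      then have "card (insert j S) = Suc (card S)" using j by simp
      then show ?thesis using j S by (metis Suc_le_mono)
    qed
  qed
  then obtain S where S: "S \<in> F" "card S \<ge> card J" by auto
  have "S \<subseteq> J" using S FJ by auto
  then have "S = J" using S finJ by (meson card_seteq)
  then show ?thesis using S by simp
qed


lemma weak_duality: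
  assumes finJ: "finite J" and FJ: "F \<subseteq> Pow J" and JF: "J \<in> F"
    and x: "x \<in> polyP J F w b" and y: "dual_feasible J F w c y"
  shows "dual_obj F b y \<le> (\<Sum>j\<in>J. c j * x j)"
proof -
  have finF: "finite F" using FJ finJ by (meson finite_Pow_iff finite_subset)
  have "dual_obj F b y \<le> (\<Sum>S\<in>F. y S * (\<Sum>j\<in>S. w S j * x j))"
    unfolding dual_obj_def
  proof (rule sum_mono)
    fix S assume S: "S \<in> F"
    show "b S * y S \<le> y S * (\<Sum>j\<in>S. w S j * x j)"
    proof (cases "S = J")
      case True then show ?thesis using x by (simp add: polyP_def)
    next
      case False
      then have "y S \<ge> 0" "b S \<le> (\<Sum>j\<in>S. w S j * x j)" using x y S by (auto simp: polyP_def dual_feasible_def)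
      then show ?thesis by (metis mult.commute mult_left_mono)
    qed
  qed
  also have "\<dots> = (\<Sum>S\<in>F. \<Sum>j\<in>J. if j \<in> S then y S * w S j * x j else 0)"
  proof (rule sum.cong[OF refl])
    fix S assume "S \<in> F"
    then have "S \<subseteq> J" using FJ by auto
    then have "{j \<in> J. j \<in> S} = S" by auto
    then show "y S * (\<Sum>j\<in>S. w S j * x j) = (\<Sum>j\<in>J. if j \<in> S then y S * w S j * x j else 0)"
      using sum.inter_filter[OF finJ, of "\<lambda>j. y S * w S j * x j" "\<lambda>j. j \<in> S"]
      by (simp add: sum_distrib_left mult.assoc)
  qed
  also have "\<dots> = (\<Sum>j\<in>J. \<Sum>S\<in>F. if j \<in> S then y S * w S j * x j else 0)" by (rule sum.swap)
  also have "\<dots> = (\<Sum>j\<in>J. x j * (\<Sum>S\<in>{S\<in>F. j \<in> S}. w S j * y S))"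
  proof (rule sum.cong[OF refl])
    fix j
    show "(\<Sum>S\<in>F. if j \<in> S then y S * w S j * x j else 0) = x j * (\<Sum>S\<in>{S\<in>F. j \<in> S}. w S j * y S)"
      using sum.inter_filter[OF finF, of "\<lambda>S. y S * w S j * x j" "\<lambda>S. j \<in> S"]
      by (simp add: sum_distrib_left mult_ac)
  qed
  also have "\<dots> \<le> (\<Sum>j\<in>J. c j * x j)"
  proof (rule sum_mono)
    fix j assume j: "j \<in> J"
    then have "x j \<ge> 0" using x by (simp add: polyP_def)
    moreover have "(\<Sum>S\<in>{S\<in>F. j \<in> S}. w S j * y S) \<le> c j" using y j by (simp add: dual_feasible_def)
    ultimately show "x j * (\<Sum>S\<in>{S\<in>F. j \<in> S}. w S j * y S) \<le> c j * x j"
      by (metis mult.commute mult_left_mono)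
  qed
  finally show ?thesis .
qed

theorem theorem1:
  fixes J :: "'a set" and F :: "'a set set"
    and w :: "'a set \<Rightarrow> 'a \<Rightarrow> real" and b :: "'a set \<Rightarrow> real"
    and c :: "'a \<Rightarrow> real" and p :: "'a list" and \<nu> :: "'a \<Rightarrow> real"
  assumes finJ: "finite J" and neJ: "J \<noteq> {}"
    and FJ: "F \<subseteq> Pow J" and empty: "{} \<in> F"
    and bd: "\<And>S. S \<in> F \<Longrightarrow> S \<noteq> {} \<Longrightarrow> inner_bd F S \<noteq> {}"
    and aug: "\<And>S. S \<in> F \<Longrightarrow> S \<noteq> J \<Longrightarrow> \<exists>j \<in> J - S. insert j S \<in> F"
    and bpos: "\<And>S. S \<in> F \<Longrightarrow> b S \<ge> 0"
    and wpos: "\<And>S j. S \<in> F \<Longrightarrow> j \<in> S \<Longrightarrow> w S j > 0"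
    and poly: "ext_polymatroid J F w b"
    and alg: "AG1_output J F w c p \<nu>"
  shows
    "(\<forall>x :: 'a \<Rightarrow> real. (\<Sum>j\<in>J. c j * x j) =
        \<nu> (p ! 0) * (\<Sum>j\<in>Sk p 0. w (Sk p 0) j * x j)
        + (\<Sum>k\<in>{1..<length p}. (\<nu> (p ! k) - \<nu> (p ! (k - 1))) * (\<Sum>j\<in>Sk p k. w (Sk p k) j * x j)))
     \<and> (\<Sum>j\<in>J. c j * xpi J w b p j) =
        \<nu> (p ! 0) * b (Sk p 0) + (\<Sum>k\<in>{1..<length p}. (\<nu> (p ! k) - \<nu> (p ! (k - 1))) * b (Sk p k))
     \<and> ((\<forall>k. Suc k < length p \<longrightarrow> \<nu> (p ! k) \<le> \<nu> (p ! Suc k)) \<longrightarrow>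
          xpi J w b p \<in> polyP J F w b
        \<and> dual_feasible J F w c (ypi p \<nu>)
        \<and> (\<forall>x \<in> polyP J F w b. (\<Sum>j\<in>J. c j * xpi J w b p j) \<le> (\<Sum>j\<in>J. c j * x j))
        \<and> (\<forall>y. dual_feasible J F w c y \<longrightarrow> dual_obj F b y \<le> dual_obj F b (ypi p \<nu>))
        \<and> (\<Sum>j\<in>J. c j * xpi J w b p j) =
             \<nu> (p ! 0) * b (Sk p 0) + (\<Sum>k\<in>{1..<length p}. (\<nu> (p ! k) - \<nu> (p ! (k - 1))) * b (Sk p k))
        \<and> dual_obj F b (ypi p \<nu>) =
             \<nu> (p ! 0) * b (Sk p 0) + (\<Sum>k\<in>{1..<length p}. (\<nu> (p ! k) - \<nu> (p ! (k - 1))) * b (Sk p k)))"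
proof -
  have dp: "distinct p" and setp: "set p = J"
    and algk: "\<And>k. k < length p \<Longrightarrow> p ! k \<in> inner_bd F (Sk p k)
        \<and> (\<forall>j \<in> inner_bd F (Sk p k). ratio c w \<nu> p k (p ! k) \<le> ratio c w \<nu> p k j)
        \<and> yinc \<nu> p k = ratio c w \<nu> p k (p ! k)"
    using alg unfolding AG1_output_def by auto
  define n where "n = length p"
  have npos: "0 < n" using neJ setp n_def by auto
  have Sk0: "Sk p 0 = J" using setp by (simp add: Sk_def)
  have Sksub: "Sk p k \<subseteq> J" for k using setp by (auto simp: Sk_def dest: in_set_dropD)
  have JF: "J \<in> F" using J_in_F[OF finJ FJ empty aug] .
  have SkF: "k < n \<Longrightarrow> Sk p k \<in> F" for k
  proof (induction k)
    case 0 then show ?case using JF Sk0 by simp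
  next
    case (Suc k)
    then have "p ! k \<in> inner_bd F (Sk p k)" using algk n_def by simp
    then have "Sk p k - {p ! k} \<in> F" by (simp add: inner_bd_def)
    then show ?case using Sk_step[OF dp, of k] Suc.prems n_def by simp
  qed
  have cdec: "c (p ! m) = (\<Sum>k<Suc m. yinc \<nu> p k * w (Sk p k) (p ! m))" if m: "m < n" for m
  proof -
    have wp: "w (Sk p m) (p ! m) > 0" using wpos[OF SkF[OF m]] Sk_nth_mem[OF dp, of m m] m n_def by simp
    have "yinc \<nu> p m = (c (p!m) - (\<Sum>l<m. yinc \<nu> p l * w (Sk p l) (p!m))) / w (Sk p m) (p ! m)"
      using algk[of m] m n_def by (simp add: ratio_def)
    then have "yinc \<nu> p m * w (Sk p m) (p ! m) = c (p!m) - (\<Sum>l<m. yinc \<nu> p l * w (Sk p l) (p!m))"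
      using wp by (simp add: field_simps)
    then show ?thesis by simp
  qed
  have cJ: "c j = (\<Sum>k<n. if j \<in> Sk p k then yinc \<nu> p k * w (Sk p k) j else 0)" if j: "j \<in> J" for j
  proof -
    obtain m where m: "m < n" "j = p ! m" using j setp n_def by (metis in_set_conv_nth)
    have "(\<Sum>k<n. if j \<in> Sk p k then yinc \<nu> p k * w (Sk p k) j else 0)
        = (\<Sum>k\<in>{k\<in>{..<n}. j \<in> Sk p k}. yinc \<nu> p k * w (Sk p k) j)"
      by (rule sum.inter_filter[symmetric]) simp
    also have "{k\<in>{..<n}. j \<in> Sk p k} = {..<Suc m}"
      using m Sk_nth_mem[OF dp, of m] n_def by auto
    finally show ?thesis using cdec[OF m(1)] m(2) by simp
  qed
  have conv: "(\<Sum>k<n. yinc \<nu> p k * A k) = \<nu> (p ! 0) * A 0 + (\<Sum>k\<in>{1..<n}. (\<nu> (p ! k) - \<nu> (p ! (k - 1))) * A k)"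
    for A :: "nat \<Rightarrow> real"
  proof -
    have "{..<n} = insert 0 {1..<n}" using npos by auto
    then have "(\<Sum>k<n. yinc \<nu> p k * A k) = yinc \<nu> p 0 * A 0 + (\<Sum>k\<in>{1..<n}. yinc \<nu> p k * A k)"
      by simp
    also have "(\<Sum>k\<in>{1..<n}. yinc \<nu> p k * A k) = (\<Sum>k\<in>{1..<n}. (\<nu> (p ! k) - \<nu> (p ! (k - 1))) * A k)"
      by (rule sum.cong) (auto simp: yinc_def)
    finally show ?thesis by (simp add: yinc_def)
  qed
  have decomp: "(\<Sum>j\<in>J. c j * x j) = (\<Sum>k<n. yinc \<nu> p k * (\<Sum>j\<in>Sk p k. w (Sk p k) j * x j))" for x :: "'a \<Rightarrow> real"
  proof -
    have "(\<Sum>j\<in>J. c j * x j) = (\<Sum>j\<in>J. \<Sum>k<n. if j \<in> Sk p k then yinc \<nu> p k * w (Sk p k) j * x j else 0)"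
    proof (rule sum.cong[OF refl])
      fix j assume j: "j \<in> J"
      have "c j * x j = (\<Sum>k<n. (if j \<in> Sk p k then yinc \<nu> p k * w (Sk p k) j else 0) * x j)"
        using cJ[OF j] by (simp only: sum_distrib_right)
      then show "c j * x j = (\<Sum>k<n. if j \<in> Sk p k then yinc \<nu> p k * w (Sk p k) j * x j else 0)"
        by (auto intro!: sum.cong)
    qed
    also have "\<dots> = (\<Sum>k<n. \<Sum>j\<in>J. if j \<in> Sk p k then yinc \<nu> p k * w (Sk p k) j * x j else 0)"
      by (rule sum.swap)
    also have "\<dots> = (\<Sum>k<n. yinc \<nu> p k * (\<Sum>j\<in>Sk p k. w (Sk p k) j * x j))"
    proof (rule sum.cong[OF refl])
      fix k
      have "{j \<in> J. j \<in> Sk p k} = Sk p k" using Sksub by auto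
      then show "(\<Sum>j\<in>J. if j \<in> Sk p k then yinc \<nu> p k * w (Sk p k) j * x j else 0) = yinc \<nu> p k * (\<Sum>j\<in>Sk p k. w (Sk p k) j * x j)"
        using sum.inter_filter[OF finJ, of "\<lambda>j. yinc \<nu> p k * w (Sk p k) j * x j" "\<lambda>j. j \<in> Sk p k"]
        by (simp add: sum_distrib_left mult.assoc)
    qed
    finally show ?thesis .
  qed
  have wnz: "\<forall>k<length p. w (Sk p k) (p!k) \<noteq> 0"
    using wpos SkF Sk_nth_mem[OF dp] n_def by (metis less_irrefl order_refl)
  have xeq: "\<forall>k<length p. (\<Sum>j\<in>Sk p k. w (Sk p k) j * xpi J w b p j) = b (Sk p k)"
    using theI'[OF tri_unique[OF dp wnz, of b]] setp unfolding xpi_def by simp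
  define V where "V = \<nu> (p ! 0) * b (Sk p 0) + (\<Sum>k\<in>{1..<length p}. (\<nu> (p ! k) - \<nu> (p ! (k - 1))) * b (Sk p k))"
  have partA1: "\<forall>x :: 'a \<Rightarrow> real. (\<Sum>j\<in>J. c j * x j) =
        \<nu> (p ! 0) * (\<Sum>j\<in>Sk p 0. w (Sk p 0) j * x j)
        + (\<Sum>k\<in>{1..<length p}. (\<nu> (p ! k) - \<nu> (p ! (k - 1))) * (\<Sum>j\<in>Sk p k. w (Sk p k) j * x j))"
    using decomp conv n_def by simp
  have primal: "(\<Sum>j\<in>J. c j * xpi J w b p j) = (\<Sum>k<n. yinc \<nu> p k * b (Sk p k))"
    using decomp xeq n_def by simp
  have partA2: "(\<Sum>j\<in>J. c j * xpi J w b p j) = V"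
    using primal conv n_def V_def by simp
  have finF: "finite F" using FJ finJ by (meson finite_Pow_iff finite_subset)
  have dobj: "dual_obj F b (ypi p \<nu>) = (\<Sum>k<n. yinc \<nu> p k * b (Sk p k))"
  proof -
    have "dual_obj F b (ypi p \<nu>) = (\<Sum>S\<in>F. \<Sum>k<n. if S = Sk p k then b S * yinc \<nu> p k else 0)"
      unfolding dual_obj_def ypi_def n_def
      by (rule sum.cong[OF refl]) (simp add: sum_distrib_left if_distrib cong: if_cong)
    also have "\<dots> = (\<Sum>k<n. \<Sum>S\<in>F. if S = Sk p k then b S * yinc \<nu> p k else 0)" by (rule sum.swap)
    also have "\<dots> = (\<Sum>k<n. yinc \<nu> p k * b (Sk p k))"
      by (rule sum.cong[OF refl]) (simp add: sum.delta[OF finF] SkF)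
    finally show ?thesis .
  qed
  have dfeq: "(\<Sum>S\<in>{S\<in>F. j \<in> S}. w S j * ypi p \<nu> S) = c j" if j: "j \<in> J" for j
  proof -
    have fin2: "finite {S\<in>F. j \<in> S}" using finF by simp
    have "(\<Sum>S\<in>{S\<in>F. j \<in> S}. w S j * ypi p \<nu> S) = (\<Sum>S\<in>{S\<in>F. j \<in> S}. \<Sum>k<n. if S = Sk p k then w (Sk p k) j * yinc \<nu> p k else 0)"
      unfolding ypi_def n_def
      by (rule sum.cong[OF refl]) (simp add: sum_distrib_left if_distrib cong: if_cong)
    also have "\<dots> = (\<Sum>k<n. \<Sum>S\<in>{S\<in>F. j \<in> S}. if S = Sk p k then w (Sk p k) j * yinc \<nu> p k else 0)" by (rule sum.swap)
    also have "\<dots> = (\<Sum>k<n. if j \<in> Sk p k then yinc \<nu> p k * w (Sk p k) j else 0)"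
      by (rule sum.cong[OF refl]) (simp add: sum.delta[OF fin2] SkF mult.commute)
    finally show ?thesis using cJ[OF j] by simp
  qed
  have dV: "dual_obj F b (ypi p \<nu>) = V" using dobj primal partA2 by simp
  have pfs: "p \<in> full_strings J F" using dp setp SkF n_def by (simp add: full_strings_def)
  have xin: "xpi J w b p \<in> polyP J F w b" using poly pfs by (simp add: ext_polymatroid_def)
  have partB: "dual_feasible J F w c (ypi p \<nu>)
        \<and> (\<forall>x \<in> polyP J F w b. (\<Sum>j\<in>J. c j * xpi J w b p j) \<le> (\<Sum>j\<in>J. c j * x j))
        \<and> (\<forall>y. dual_feasible J F w c y \<longrightarrow> dual_obj F b y \<le> dual_obj F b (ypi p \<nu>))"
    if mono: "\<forall>k. Suc k < length p \<longrightarrow> \<nu> (p ! k) \<le> \<nu> (p ! Suc k)"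
  proof (intro conjI)
    show df: "dual_feasible J F w c (ypi p \<nu>)"
      unfolding dual_feasible_def
    proof (intro conjI ballI)
      fix j assume "j \<in> J" then show "(\<Sum>S\<in>{S\<in>F. j \<in> S}. w S j * ypi p \<nu> S) \<le> c j" using dfeq by simp
    next
      fix S assume S: "S \<in> F - {J}"
      show "0 \<le> ypi p \<nu> S" unfolding ypi_def
      proof (rule sum_nonneg)
        fix k assume k: "k \<in> {..<length p}"
        show "0 \<le> (if S = Sk p k then yinc \<nu> p k else 0)"
        proof (cases "S = Sk p k")
          case True
          then have "k \<noteq> 0" using S Sk0 by auto
          then have "\<nu> (p ! (k - 1)) \<le> \<nu> (p ! k)" using mono[rule_format, of "k - 1"] k by simp
          then show ?thesis using True \<open>k \<noteq> 0\<close> by (simp add: yinc_def)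
        qed simp
      qed
    qed
    show "\<forall>x\<in>polyP J F w b. (\<Sum>j\<in>J. c j * xpi J w b p j) \<le> (\<Sum>j\<in>J. c j * x j)"
    proof
      fix x assume "x \<in> polyP J F w b"
      from weak_duality[OF finJ FJ JF this df] show "(\<Sum>j\<in>J. c j * xpi J w b p j) \<le> (\<Sum>j\<in>J. c j * x j)"
        using dobj primal by simp
    qed
    show "\<forall>y. dual_feasible J F w c y \<longrightarrow> dual_obj F b y \<le> dual_obj F b (ypi p \<nu>)"
    proof (intro allI impI)
      fix y assume "dual_feasible J F w c y"
      from weak_duality[OF finJ FJ JF xin this] show "dual_obj F b y \<le> dual_obj F b (ypi p \<nu>)"
        using dobj primal by simp
    qed
  qed
  show ?thesis unfolding V_def[symmetric]
    by (intro conjI impI; (rule partA1 partA2 dV xin)?; use partB in blast)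
qed

end
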